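(* Let $G$ be a finite group, $H\subseteq G$ of index $2$, $\sigma\in G\setminus H$, $\chi:H\to\mathbb{C}^\times$ a character with $\rho=\mathrm{Ind}_H^G(\chi)$ faithful, and suppose $\epsilon_\chi=\chi^\sigma/\chi$ has order exactly $2$. Let $K=\ker(\epsilon_\chi)$ and $\chi_K=\chi|_K$. Then for every subgroup $H'\subset G$ of index $2$ and character $\chi':H'\to\mathbb{C}^\times$ with $\rho\cong \mathrm{Ind}_{H'}^G(\chi')$ one has $K\subseteq H'$ and $\chi'|_K=\chi_K$; moreover $g^2\in K$ for all $g\in G$ and $$\mathrm{tr}(\rho(g))=\begin{cases}2\chi_K(g)& g\in K,\\ 0 & g\notin K,\end{cases}\qquad \det(\rho(g))=\begin{cases}\chi_K(g^2)& g\in K,\\ -\chi_K(g^2)& g\notin K.\end{cases}$$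
   Context: $\chi^\sigma(h)=\chi(\sigma^{-1}h\sigma)$ for $h\in H$; for $H$ of index $2$ this is independent of $\sigma\in G\setminus H$. *)

theory Defs
  imports "HOL-Algebra.Algebra" "Jordan_Normal_Form.Determinant"
begin

definition lin_char :: "('a, 'b) monoid_scheme \<Rightarrow> 'a set \<Rightarrow> ('a \<Rightarrow> complex) \<Rightarrow> bool" where
  "lin_char G H chi \<longleftrightarrow> (\<forall>h\<in>H. chi h \<noteq> 0) \<and>
     (\<forall>x\<in>H. \<forall>y\<in>H. chi (x \<otimes>\<^bsub>G\<^esub> y) = chi x * chi y)"

text \<open>Induced representation Ind_H^G(chi) for H of index 2, as 2x2 matrices in the basis
  1 (x) 1, s (x) 1 where s is a (chosen) element of G outside H.\<close>
definition ind_rep :: "('a, 'b) monoid_scheme \<Rightarrow> 'a set \<Rightarrow> ('a \<Rightarrow> complex) \<Rightarrow> 'a \<Rightarrow> complex mat" where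
  "ind_rep G H chi g =
     (let s = (SOME s. s \<in> carrier G - H) in
      if g \<in> H then mat_of_rows_list 2 [[chi g, 0], [0, chi (inv\<^bsub>G\<^esub> s \<otimes>\<^bsub>G\<^esub> g \<otimes>\<^bsub>G\<^esub> s)]]
      else mat_of_rows_list 2 [[0, chi (g \<otimes>\<^bsub>G\<^esub> s)], [chi (inv\<^bsub>G\<^esub> s \<otimes>\<^bsub>G\<^esub> g), 0]])"

definition mat_trace :: "complex mat \<Rightarrow> complex" where
  "mat_trace A = (\<Sum>i<dim_row A. A $$ (i, i))"

definition faithful_rep :: "('a, 'b) monoid_scheme \<Rightarrow> ('a \<Rightarrow> complex mat) \<Rightarrow> bool" where
  "faithful_rep G rho \<longleftrightarrow> (\<forall>g\<in>carrier G. rho g = 1\<^sub>m 2 \<longrightarrow> g = \<one>\<^bsub>G\<^esub>)"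

definition rep_iso2 :: "('a, 'b) monoid_scheme \<Rightarrow> ('a \<Rightarrow> complex mat) \<Rightarrow> ('a \<Rightarrow> complex mat) \<Rightarrow> bool" where
  "rep_iso2 G rho1 rho2 \<longleftrightarrow> (\<exists>P \<in> carrier_mat 2 2. invertible_mat P \<and>
      (\<forall>g\<in>carrier G. P * rho1 g = rho2 g * P))"

end

theory Submission
  imports Defs
begin

lemma det2: assumes "A \<in> carrier_mat 2 2"
  shows "det A = A$$(0,0)*A$$(1,1) - A$$(0,1)*A$$(1,0)"
proof -
  have "det A = (\<Sum>i<2. A $$ (i,0) * cofactor A i 0)"
    by (rule laplace_expansion_column[OF assms]) simp
  also have "\<dots> = A$$(0,0)*A$$(1,1) - A$$(0,1)*A$$(1,0)"
    using assms
    by (simp add: numeral_2_eq_2 cofactor_def mat_delete_def det_single lessThan_Suc)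
  finally show ?thesis .
qed

lemma trace2: assumes "A \<in> carrier_mat 2 2"
  shows "mat_trace A = A$$(0,0) + A$$(1,1)"
  using assms by (simp add: mat_trace_def numeral_2_eq_2 lessThan_Suc)

lemma sim_det:
  fixes A B P :: "complex mat"
  assumes A: "A \<in> carrier_mat 2 2" and B: "B \<in> carrier_mat 2 2" and P: "P \<in> carrier_mat 2 2"
    and inv: "invertible_mat P" and eq: "P * A = B * P"
  shows "det A = det B"
proof -
  from inv obtain Q where PQ: "P * Q = 1\<^sub>m 2" and QP: "Q * P = 1\<^sub>m (dim_row Q)"
    using P unfolding invertible_mat_def inverts_mat_def by auto
  have c: "dim_col Q = 2" using arg_cong[OF PQ, of dim_col] by simp
  have r: "dim_row Q = 2" using arg_cong[OF QP, of dim_col] P by simp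
  have Q: "Q \<in> carrier_mat 2 2" using c r by auto
  have QP2: "Q * P = 1\<^sub>m 2" using QP r by simp
  have "P * A * Q = B * P * Q" using eq by simp
  also have "\<dots> = B * (P * Q)" using B P Q by (simp add: assoc_mult_mat)
  finally have "B = P * A * Q" using PQ B by simp
  hence "similar_mat_wit B A P Q"
    unfolding similar_mat_wit_def using A B P Q PQ QP2 by (simp add: Let_def)
  hence "similar_mat B A" unfolding similar_mat_def by blast
  thus ?thesis using det_similar[of B A] B by metis
qed

lemma sim_trace:
  fixes A B P :: "complex mat"
  assumes A: "A \<in> carrier_mat 2 2" and B: "B \<in> carrier_mat 2 2" and P: "P \<in> carrier_mat 2 2"
    and inv: "invertible_mat P" and eq: "P * A = B * P"
  shows "mat_trace A = mat_trace B"
proof -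
  have "P * (A + 1\<^sub>m 2) = P * A + P" using A P by (simp add: mult_add_distrib_mat)
  also have "\<dots> = (B + 1\<^sub>m 2) * P" using B P eq by (simp add: add_mult_distrib_mat)
  finally have "det (A + 1\<^sub>m 2) = det (B + 1\<^sub>m 2)"
    using sim_det[of "A + 1\<^sub>m 2" "B + 1\<^sub>m 2" P] A B P inv by simp
  moreover have "det (A + 1\<^sub>m 2) = det A + mat_trace A + 1"
    using A by (simp add: det2 trace2 algebra_simps)
  moreover have "det (B + 1\<^sub>m 2) = det B + mat_trace B + 1"
    using B by (simp add: det2 trace2 algebra_simps)
  ultimately show ?thesis using sim_det[OF assms] by simp
qed
lemma ind_rep_carrier: "ind_rep G H chi g \<in> carrier_mat 2 2"
  unfolding ind_rep_def Let_def by (auto simp: mat_of_rows_list_def)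

lemma tr22: "mat_trace (mat_of_rows_list 2 [[a, b], [c, d]]) = a + d"
  by (simp add: mat_trace_def mat_of_rows_list_def numeral_2_eq_2 lessThan_Suc)
lemma det22: fixes a b c d :: complex shows "det (mat_of_rows_list 2 [[a, b], [c, d]]) = a * d - b * c"
  by (subst det2) (auto simp add: mat_of_rows_list_def numeral_2_eq_2)

lemma ind_rep_in:
  assumes "g \<in> H" "s = (SOME s. s \<in> carrier G - H)"
  shows "mat_trace (ind_rep G H chi g) = chi g + chi (inv\<^bsub>G\<^esub> s \<otimes>\<^bsub>G\<^esub> g \<otimes>\<^bsub>G\<^esub> s)"
    and "det (ind_rep G H chi g) = chi g * chi (inv\<^bsub>G\<^esub> s \<otimes>\<^bsub>G\<^esub> g \<otimes>\<^bsub>G\<^esub> s)"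
  using assms unfolding ind_rep_def Let_def by (simp_all add: tr22 det22)

lemma ind_rep_out:
  assumes "g \<notin> H" "s = (SOME s. s \<in> carrier G - H)"
  shows "mat_trace (ind_rep G H chi g) = 0"
    and "det (ind_rep G H chi g) = - chi (g \<otimes>\<^bsub>G\<^esub> s) * chi (inv\<^bsub>G\<^esub> s \<otimes>\<^bsub>G\<^esub> g)"
  using assms unfolding ind_rep_def Let_def by (simp_all add: tr22 det22)

lemma idx2_mul:
  fixes G (structure)
  assumes grp: "group G" and sg: "subgroup H G" and c2: "card (rcosets\<^bsub>G\<^esub> H) = 2"
    and g: "g \<in> carrier G - H" and s: "s \<in> carrier G - H"
  shows "g \<otimes>\<^bsub>G\<^esub> s \<in> H"
proof (rule ccontr)
  interpret group G by (rule grp)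
  assume ns: "g \<otimes> s \<notin> H"
  have Hsub: "H \<subseteq> carrier G" using sg by (rule subgroup.subset)
  have gsc: "g \<otimes> s \<in> carrier G" using g s by auto
  have "H #> \<one> = H" using Hsub by (simp add: coset_mult_one)
  hence r1: "H \<in> rcosets H" using rcosetsI[OF Hsub, of \<one>] by simp
  have r2: "H #> s \<in> rcosets H" using rcosetsI[OF Hsub] s by simp
  have r3: "H #> (g \<otimes> s) \<in> rcosets H" using rcosetsI[OF Hsub gsc] .
  have n2: "H #> s \<noteq> H" using rcos_self[of s H] s sg by auto
  have n3: "H #> (g \<otimes> s) \<noteq> H" using rcos_self[OF gsc sg] ns by auto
  obtain x y where xy: "rcosets H = {x, y}" using c2 card_2_iff by metis
  have "H #> s = H #> (g \<otimes> s)" using r1 r2 r3 n2 n3 xy by auto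
  hence "g \<otimes> s \<in> H #> s" using rcos_self[OF gsc sg] by simp
  then obtain h where h: "h \<in> H" "g \<otimes> s = h \<otimes> s" unfolding r_coset_def by auto
  hence "g = h" using g s Hsub by (metis DiffD1 r_cancel subsetD)
  thus False using g h by simp
qed

lemma quad_eq:
  fixes a b x :: complex
  assumes "a + b = 2 * x" "a * b = x * x"
  shows "a = x"
proof -
  have b: "b = 2 * x - a" using assms(1) by (simp add: algebra_simps)
  have xx: "x * x = 2 * a * x - a * a" using assms(2) unfolding b by (simp add: algebra_simps)
  have "(a - x) * (a - x) = a * a - 2 * a * x + x * x" by (simp add: algebra_simps)
  hence "(a - x) * (a - x) = 0" unfolding xx by simp
  thus ?thesis by simp
qed

lemma main_aux:
  fixes G (structure) and H :: "'a set" and \<sigma> :: 'a and \<chi> :: "'a \<Rightarrow> complex"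
  assumes grp: "group G" and fin: "finite (carrier G)"
    and sg: "subgroup H G" and c2: "card (rcosets\<^bsub>G\<^esub> H) = 2"
    and sig: "\<sigma> \<in> carrier G - H"
    and lc: "lin_char G H \<chi>"
    and "faithful_rep G (ind_rep G H \<chi>)"
    and sq: "\<forall>h\<in>H. (\<chi> (inv\<^bsub>G\<^esub> \<sigma> \<otimes>\<^bsub>G\<^esub> h \<otimes>\<^bsub>G\<^esub> \<sigma>) / \<chi> h)\<^sup>2 = 1"
    and "\<exists>h\<in>H. \<chi> (inv\<^bsub>G\<^esub> \<sigma> \<otimes>\<^bsub>G\<^esub> h \<otimes>\<^bsub>G\<^esub> \<sigma>) / \<chi> h \<noteq> 1"
    and Kdef: "K = {h \<in> H. \<chi> (inv\<^bsub>G\<^esub> \<sigma> \<otimes>\<^bsub>G\<^esub> h \<otimes>\<^bsub>G\<^esub> \<sigma>) / \<chi> h = 1}"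
  shows "(\<forall>H' \<chi>'. subgroup H' G \<and> card (rcosets\<^bsub>G\<^esub> H') = 2 \<and> lin_char G H' \<chi>'
            \<and> rep_iso2 G (ind_rep G H \<chi>) (ind_rep G H' \<chi>')
            \<longrightarrow> K \<subseteq> H' \<and> (\<forall>k\<in>K. \<chi>' k = \<chi> k))
      \<and> (\<forall>g\<in>carrier G. g \<otimes>\<^bsub>G\<^esub> g \<in> K)
      \<and> (\<forall>g\<in>carrier G. mat_trace (ind_rep G H \<chi> g) = (if g \<in> K then 2 * \<chi> g else 0))
      \<and> (\<forall>g\<in>carrier G. det (ind_rep G H \<chi> g) =
            (if g \<in> K then \<chi> (g \<otimes>\<^bsub>G\<^esub> g) else - \<chi> (g \<otimes>\<^bsub>G\<^esub> g)))"
proof -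
  interpret group G by (rule grp)
  have Hsub: "H \<subseteq> carrier G" using sg by (rule subgroup.subset)
  have mul: "g \<otimes> s \<in> H" if "g \<in> carrier G - H" "s \<in> carrier G - H" for g s
    using idx2_mul[OF grp sg c2 that] .
  have nz: "\<chi> h \<noteq> 0" if "h \<in> H" for h using lc that unfolding lin_char_def by auto
  have hom: "\<chi> (x \<otimes> y) = \<chi> x * \<chi> y" if "x \<in> H" "y \<in> H" for x y
    using lc that unfolding lin_char_def by auto
  have oneH: "\<one> \<in> H" using sg by (rule subgroup.one_closed)
  have chi1: "\<chi> \<one> = 1"
  proof -
    have "\<chi> \<one> = \<chi> \<one> * \<chi> \<one>" using hom[OF oneH oneH] by simp
    thus ?thesis using nz[OF oneH] by simp
  qed
  have invH: "inv u \<in> H" if "u \<in> H" for u using sg that by (rule subgroup.m_inv_closed)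
  have chiinv: "\<chi> (inv u) * \<chi> u = 1" if u: "u \<in> H" for u
  proof -
    have "inv u \<otimes> u = \<one>" using u Hsub by auto
    thus ?thesis using hom[OF invH[OF u] u] chi1 by simp
  qed
  have notin_inv: "inv s \<in> carrier G - H" if s: "s \<in> carrier G - H" for s
  proof -
    have "inv s \<notin> H"
    proof
      assume "inv s \<in> H"
      hence "inv (inv s) \<in> H" by (rule invH)
      thus False using s by simp
    qed
    thus ?thesis using s by auto
  qed
  have conj: "inv s \<otimes> h \<otimes> s \<in> H" if h: "h \<in> H" and s: "s \<in> carrier G - H" for h s
  proof -
    have hc: "h \<in> carrier G" using h Hsub by auto
    have "h \<otimes> s \<notin> H"
    proof
      assume hs: "h \<otimes> s \<in> H"
      have "inv h \<otimes> (h \<otimes> s) = s" using hc s by (simp add: m_assoc[symmetric])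
      moreover have "inv h \<otimes> (h \<otimes> s) \<in> H" using hs invH[OF h] sg by (simp add: subgroup.m_closed)
      ultimately show False using s by simp
    qed
    hence "h \<otimes> s \<in> carrier G - H" using hc s by auto
    hence "inv s \<otimes> (h \<otimes> s) \<in> H" using mul notin_inv[OF s] by blast
    thus ?thesis using hc s by (simp add: m_assoc)
  qed
  have indep: "\<chi> (inv s \<otimes> h \<otimes> s) = \<chi> (inv t \<otimes> h \<otimes> t)"
    if h: "h \<in> H" and s: "s \<in> carrier G - H" and t: "t \<in> carrier G - H" for h s t
  proof -
    have hc: "h \<in> carrier G" using h Hsub by auto
    define u where "u = inv t \<otimes> s"
    have u: "u \<in> H" unfolding u_def using mul[OF notin_inv[OF t] s] .
    define x where "x = inv t \<otimes> h \<otimes> t"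
    have x: "x \<in> H" unfolding x_def using conj[OF h t] .
    have iu: "inv u = inv s \<otimes> t" unfolding u_def using s t by (simp add: inv_mult_group)
    have "inv u \<otimes> x \<otimes> u = inv s \<otimes> h \<otimes> s"
      unfolding iu unfolding x_def u_def using s t hc
      by (simp add: m_assoc[symmetric]) (simp add: m_assoc)
    hence "\<chi> (inv s \<otimes> h \<otimes> s) = \<chi> (inv u) * \<chi> x * \<chi> u"
      using hom invH[OF u] x u sg by (metis subgroup.m_closed)
    also have "\<dots> = \<chi> x" using chiinv[OF u] by (simp add: algebra_simps)
    finally show ?thesis unfolding x_def .
  qed
  define s0 where "s0 = (SOME s. s \<in> carrier G - H)"
  have s0: "s0 \<in> carrier G - H" unfolding s0_def using sig by (rule someI)
  define c where "c h = \<chi> (inv \<sigma> \<otimes> h \<otimes> \<sigma>)" for h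
  have cs0: "\<chi> (inv s0 \<otimes> h \<otimes> s0) = c h" if "h \<in> H" for h
    unfolding c_def using indep[OF that s0 sig] .
  have cpm: "c h = \<chi> h \<or> c h = - \<chi> h" if h: "h \<in> H" for h
  proof -
    have "(c h / \<chi> h)\<^sup>2 = 1" using sq h unfolding c_def by auto
    hence "c h / \<chi> h = 1 \<or> c h / \<chi> h = -1" using power2_eq_1_iff by blast
    thus ?thesis using nz[OF h] by (auto simp: field_simps)
  qed
  have Kiff: "g \<in> K \<longleftrightarrow> g \<in> H \<and> c g = \<chi> g" for g
    unfolding Kdef c_def using nz by auto
  have notK: "c g = - \<chi> g" if "g \<in> H" "g \<notin> K" for g
    using cpm[OF that(1)] Kiff that by auto
  have KH: "K \<subseteq> H" using Kiff by auto
  have chisq: "\<chi> (g \<otimes> g) = \<chi> g * \<chi> g" if "g \<in> H" for g using hom that by blast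
  have trK: "mat_trace (ind_rep G H \<chi> g) = (if g \<in> K then 2 * \<chi> g else 0)" if g: "g \<in> carrier G" for g
  proof (cases "g \<in> H")
    case True
    then show ?thesis using ind_rep_in(1)[OF True s0_def, of \<chi>] cs0[OF True] Kiff[of g] notK[OF True] by (cases "g \<in> K") auto
  next
    case False
    then show ?thesis using ind_rep_out(1)[OF False s0_def] KH by auto
  qed
  have detK: "det (ind_rep G H \<chi> g) = (if g \<in> K then \<chi> (g \<otimes> g) else - \<chi> (g \<otimes> g))"
    if g: "g \<in> carrier G" for g
  proof (cases "g \<in> H")
    case True
    then show ?thesis using ind_rep_in(2)[OF True s0_def, of \<chi>] cs0[OF True] Kiff[of g] notK[OF True] chisq[OF True] by (cases "g \<in> K") auto
  next
    case False
    have g': "g \<in> carrier G - H" using g False by auto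
    have a: "g \<otimes> s0 \<in> H" using mul[OF g' s0] .
    have b: "inv s0 \<otimes> g \<in> H" using mul[OF notin_inv[OF s0] g'] .
    have "g \<otimes> s0 \<otimes> (inv s0 \<otimes> g) = g \<otimes> g" using g s0 by (simp add: m_assoc[symmetric]) (simp add: m_assoc)
    hence "\<chi> (g \<otimes> s0) * \<chi> (inv s0 \<otimes> g) = \<chi> (g \<otimes> g)" using hom[OF a b] by simp
    then show ?thesis using ind_rep_out(2)[OF False s0_def] KH False by auto
  qed
  have sqK: "g \<otimes> g \<in> K" if g: "g \<in> carrier G" for g
  proof (cases "g \<in> H")
    case True
    have gg: "g \<otimes> g \<in> H" using True sg by (simp add: subgroup.m_closed)
    have cg: "inv \<sigma> \<otimes> g \<otimes> \<sigma> \<in> H" using conj[OF True sig] .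
    have "inv \<sigma> \<otimes> (g \<otimes> g) \<otimes> \<sigma> = (inv \<sigma> \<otimes> g \<otimes> \<sigma>) \<otimes> (inv \<sigma> \<otimes> g \<otimes> \<sigma>)"
      using g sig by (simp add: m_assoc[symmetric]) (simp add: m_assoc)
    hence "c (g \<otimes> g) = c g * c g" unfolding c_def using hom[OF cg cg] by simp
    also have "\<dots> = \<chi> g * \<chi> g" using cpm[OF True] by auto
    finally show ?thesis using Kiff gg chisq[OF True] by simp
  next
    case False
    have g': "g \<in> carrier G - H" using g False by auto
    have gg: "g \<otimes> g \<in> H" using mul[OF g' g'] .
    have "inv g \<otimes> (g \<otimes> g) \<otimes> g = g \<otimes> g" using g by (simp add: m_assoc[symmetric])
    hence "c (g \<otimes> g) = \<chi> (g \<otimes> g)" unfolding c_def using indep[OF gg g' sig] by simp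
    thus ?thesis using Kiff gg by simp
  qed
  have part1: "K \<subseteq> H' \<and> (\<forall>k\<in>K. \<chi>' k = \<chi> k)"
    if iso: "rep_iso2 G (ind_rep G H \<chi>) (ind_rep G H' \<chi>')" for H' \<chi>'
  proof -
    obtain P where P: "P \<in> carrier_mat 2 2" "invertible_mat P"
      and eqP: "\<forall>g\<in>carrier G. P * ind_rep G H \<chi> g = ind_rep G H' \<chi>' g * P"
      using iso unfolding rep_iso2_def by blast
    define s1 where "s1 = (SOME s. s \<in> carrier G - H')"
    have main: "k \<in> H' \<and> \<chi>' k = \<chi> k" if k: "k \<in> K" for k
    proof -
      have kH: "k \<in> H" using k KH by auto
      have kc: "k \<in> carrier G" using kH Hsub by auto
      have tr: "mat_trace (ind_rep G H' \<chi>' k) = 2 * \<chi> k"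
        using sim_trace[OF ind_rep_carrier ind_rep_carrier P(1) P(2) eqP[rule_format, OF kc]]
          trK[OF kc] k by simp
      have de: "det (ind_rep G H' \<chi>' k) = \<chi> k * \<chi> k"
        using sim_det[OF ind_rep_carrier ind_rep_carrier P(1) P(2) eqP[rule_format, OF kc]]
          detK[OF kc] k chisq[OF kH] by simp
      have kH': "k \<in> H'"
      proof (rule ccontr)
        assume "k \<notin> H'"
        hence "\<chi> k = 0" using tr ind_rep_out(1)[OF _ s1_def] by auto
        thus False using nz[OF kH] by simp
      qed
      have "\<chi>' k = \<chi> k"
        using quad_eq[of "\<chi>' k" "\<chi>' (inv s1 \<otimes> k \<otimes> s1)" "\<chi> k"]
          tr de ind_rep_in[OF kH' s1_def] by simp
      thus ?thesis using kH' by simp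
    qed
    thus ?thesis by blast
  qed
  show ?thesis using part1 sqK trK detK by blast
qed

theorem mainTheorem2:
  fixes G :: "('a, 'b) monoid_scheme" and H :: "'a set" and \<sigma> :: 'a and \<chi> :: "'a \<Rightarrow> complex"
  assumes "group G" and "finite (carrier G)"
    and "subgroup H G" and "card (rcosets\<^bsub>G\<^esub> H) = 2"
    and "\<sigma> \<in> carrier G - H"
    and "lin_char G H \<chi>"
    and "faithful_rep G (ind_rep G H \<chi>)"
    and "\<forall>h\<in>H. (\<chi> (inv\<^bsub>G\<^esub> \<sigma> \<otimes>\<^bsub>G\<^esub> h \<otimes>\<^bsub>G\<^esub> \<sigma>) / \<chi> h)\<^sup>2 = 1"
    and "\<exists>h\<in>H. \<chi> (inv\<^bsub>G\<^esub> \<sigma> \<otimes>\<^bsub>G\<^esub> h \<otimes>\<^bsub>G\<^esub> \<sigma>) / \<chi> h \<noteq> 1"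
    and "K = {h \<in> H. \<chi> (inv\<^bsub>G\<^esub> \<sigma> \<otimes>\<^bsub>G\<^esub> h \<otimes>\<^bsub>G\<^esub> \<sigma>) / \<chi> h = 1}"
  shows "(\<forall>H' \<chi>'. subgroup H' G \<and> card (rcosets\<^bsub>G\<^esub> H') = 2 \<and> lin_char G H' \<chi>'
            \<and> rep_iso2 G (ind_rep G H \<chi>) (ind_rep G H' \<chi>')
            \<longrightarrow> K \<subseteq> H' \<and> (\<forall>k\<in>K. \<chi>' k = \<chi> k))
      \<and> (\<forall>g\<in>carrier G. g \<otimes>\<^bsub>G\<^esub> g \<in> K)
      \<and> (\<forall>g\<in>carrier G. mat_trace (ind_rep G H \<chi> g) = (if g \<in> K then 2 * \<chi> g else 0))
      \<and> (\<forall>g\<in>carrier G. det (ind_rep G H \<chi> g) =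
            (if g \<in> K then \<chi> (g \<otimes>\<^bsub>G\<^esub> g) else - \<chi> (g \<otimes>\<^bsub>G\<^esub> g)))"
  using main_aux[OF assms] .

end
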